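(* Let $D_5$ be the undirected tree with vertices $v,a,b,c,d$ and edges $va, vb, vc, cd$. Let $\Gamma$ be a vertex-transitive connected undirected graph with more than five vertices that contains a subgraph isomorphic to $D_5$, and suppose $\Upsilon_v(D_5,\Gamma)$ is finite. Then $\Upsilon_v^{\mathrm{sym}}(D_5,\Gamma)<5\,\Upsilon_v(D_5,\Gamma)$. In particular, $D_5$ is not vertex-costly in the class of vertex-transitive connected graphs.
   Context: Undirected graphs (loops and multiple edges may be present in $\Gamma$). "Subgraph" means an arbitrary (not necessarily induced) subgraph. A graph is vertex-transitive if its automorphism group acts transitively on its vertices. $\Upsilon_v(K,\Gamma)$ is the minimal integer $n$ such that $\Gamma$ has a set $X$ of $n$ vertices with every subgraph of $\Gamma$ isomorphic to $K$ containing a vertex of $X$; $\Upsilon_v^{\mathrm{sym}}(K,\Gamma)$ is the minimal such $n$ when $X$ is additionally required to be $\mathrm{Aut}\,\Gamma$-invariant. A finite graph $K$ with $k$ vertices is vertex-costly in a class $\mathcal{K}$ if for every integer $m$ there exists $\Gamma_m\in\mathcal{K}$ with $\Upsilon_v^{\mathrm{sym}}(K,\Gamma_m)=k\cdot\Upsilon_v(K,\Gamma_m)\ge m$. *)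

theory Defs
  imports Main "HOL-Library.Extended_Nat"
begin

definition multigraph :: "'v set \<Rightarrow> 'e set \<Rightarrow> ('e \<Rightarrow> 'v set) \<Rightarrow> bool" where
  "multigraph V E ends \<longleftrightarrow> (\<forall>e\<in>E. ends e \<subseteq> V \<and> (card (ends e) = 1 \<or> card (ends e) = 2))"

definition adj :: "'e set \<Rightarrow> ('e \<Rightarrow> 'v set) \<Rightarrow> 'v \<Rightarrow> 'v \<Rightarrow> bool" where
  "adj E ends x y \<longleftrightarrow> (\<exists>e\<in>E. ends e = {x, y})"

definition is_aut :: "'v set \<Rightarrow> 'e set \<Rightarrow> ('e \<Rightarrow> 'v set) \<Rightarrow> ('v \<Rightarrow> 'v) \<Rightarrow> ('e \<Rightarrow> 'e) \<Rightarrow> bool" where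
  "is_aut V E ends f g \<longleftrightarrow> bij_betw f V V \<and> bij_betw g E E \<and> (\<forall>e\<in>E. ends (g e) = f ` ends e)"

definition vertex_transitive :: "'v set \<Rightarrow> 'e set \<Rightarrow> ('e \<Rightarrow> 'v set) \<Rightarrow> bool" where
  "vertex_transitive V E ends \<longleftrightarrow>
     (\<forall>x\<in>V. \<forall>y\<in>V. \<exists>f g. is_aut V E ends f g \<and> f x = y)"

definition connected_graph :: "'v set \<Rightarrow> 'e set \<Rightarrow> ('e \<Rightarrow> 'v set) \<Rightarrow> bool" where
  "connected_graph V E ends \<longleftrightarrow> V \<noteq> {} \<and>
     (\<forall>x\<in>V. \<forall>y\<in>V. (x, y) \<in> {(u, w). adj E ends u w}\<^sup>*)"

text \<open>A subgraph of the graph isomorphic to D5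
  is given by an injective vertex assignment with the four required adjacencies
  (edges are then distinct automatically since their end-pairs differ).\<close>
definition D5_copy :: "'v set \<Rightarrow> 'e set \<Rightarrow> ('e \<Rightarrow> 'v set) \<Rightarrow> 'v \<Rightarrow> 'v \<Rightarrow> 'v \<Rightarrow> 'v \<Rightarrow> 'v \<Rightarrow> bool" where
  "D5_copy V E ends v a b c d \<longleftrightarrow>
     {v, a, b, c, d} \<subseteq> V \<and> distinct [v, a, b, c, d] \<and>
     adj E ends v a \<and> adj E ends v b \<and> adj E ends v c \<and> adj E ends c d"

definition D5_vertex_cover :: "'v set \<Rightarrow> 'e set \<Rightarrow> ('e \<Rightarrow> 'v set) \<Rightarrow> 'v set \<Rightarrow> bool" where
  "D5_vertex_cover V E ends X \<longleftrightarrow> X \<subseteq> V \<and>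
     (\<forall>v a b c d. D5_copy V E ends v a b c d \<longrightarrow> {v, a, b, c, d} \<inter> X \<noteq> {})"

definition aut_invariant :: "'v set \<Rightarrow> 'e set \<Rightarrow> ('e \<Rightarrow> 'v set) \<Rightarrow> 'v set \<Rightarrow> bool" where
  "aut_invariant V E ends X \<longleftrightarrow> (\<forall>f g. is_aut V E ends f g \<longrightarrow> f ` X = X)"

text \<open>Upsilon_v(D5, Gamma) and its symmetric version, valued in enat (infinity if no finite set).\<close>
definition Upsilon_v_D5 :: "'v set \<Rightarrow> 'e set \<Rightarrow> ('e \<Rightarrow> 'v set) \<Rightarrow> enat" where
  "Upsilon_v_D5 V E ends =
     (INF X \<in> {X. finite X \<and> D5_vertex_cover V E ends X}. enat (card X))"

definition Upsilon_v_sym_D5 :: "'v set \<Rightarrow> 'e set \<Rightarrow> ('e \<Rightarrow> 'v set) \<Rightarrow> enat" where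
  "Upsilon_v_sym_D5 V E ends =
     (INF X \<in> {X. finite X \<and> D5_vertex_cover V E ends X \<and> aut_invariant V E ends X}. enat (card X))"

end

theory Submission
  imports Defs
begin

lemma card_ins_le: "card (insert a A) \<le> Suc (card A)"
  by (cases "finite A") (auto simp: card_insert_if)

lemma pick: "finite F \<Longrightarrow> card F < card A \<Longrightarrow> \<exists>y\<in>A. y \<notin> F"
  by (metis card_mono not_less subsetI)

locale BG =
  fixes V :: "'v set" and J :: "'v \<Rightarrow> 'v \<Rightarrow> bool"
  assumes sym: "J x y \<Longrightarrow> J y x"
    and irr: "\<not> J x x"
    and inV: "J x y \<Longrightarrow> x \<in> V"
    and trans: "x \<in> V \<Longrightarrow> y \<in> V \<Longrightarrow> \<exists>f. inj_on f V \<and> f ` V \<subseteq> V \<and> (\<forall>a b. J a b \<longrightarrow> J (f a) (f b)) \<and> f x = y"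
    and ex_copy: "\<exists>v a b c d. distinct [v,a,b,c,d] \<and> J v a \<and> J v b \<and> J v c \<and> J c d"
begin

definition cp where "cp v a b c d \<longleftrightarrow> distinct [v,a,b,c,d] \<and> J v a \<and> J v b \<and> J v c \<and> J c d"

definition N where "N x = {y. J x y}"

lemma inV2: "J x y \<Longrightarrow> y \<in> V" using inV sym by blast

lemma N_sub: "N x \<subseteq> V" unfolding N_def using inV2 by blast

lemma N_inj: assumes "x \<in> V" "y \<in> V" "finite (N y)" shows "card (N x) \<le> card (N y)"
proof -
  obtain f where f: "inj_on f V" "f ` V \<subseteq> V" "\<forall>a b. J a b \<longrightarrow> J (f a) (f b)" "f x = y"
    using trans[OF assms(1,2)] by blast
  have "f ` N x \<subseteq> N y" using f unfolding N_def by auto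
  moreover have "inj_on f (N x)" using f(1) N_sub inj_on_subset by blast
  ultimately show ?thesis using assms(3) by (metis card_inj_on_le)
qed

lemma infinite_case:
  assumes "infinite V" "finite X"
  shows "\<exists>v a b c d. cp v a b c d \<and> {v,a,b,c,d} \<inter> X = {}"
proof (cases "\<exists>x0\<in>V. infinite (N x0)")
  case True
  then obtain x0 where x0: "x0 \<in> V" "infinite (N x0)" by blast
  have allinf: "infinite (N y)" if yV: "y \<in> V" for y
  proof
    assume fin: "finite (N y)"
    obtain f where f: "inj_on f V" "f ` V \<subseteq> V" "\<forall>a b. J a b \<longrightarrow> J (f a) (f b)" "f x0 = y"
      using trans[OF x0(1) yV] by blast
    have "f ` N x0 \<subseteq> N y" using f unfolding N_def by auto
    moreover have "inj_on f (N x0)" using f(1) N_sub inj_on_subset by blast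
    ultimately have "finite (N x0)" using fin by (meson finite_imageD finite_subset)
    thus False using x0 by simp
  qed
  obtain v where v: "v \<in> V" "v \<notin> X"
    using assms by (metis Diff_iff Diff_infinite_finite ex_in_conv finite.emptyI)
  have i1: "infinite (N v - X)" using allinf[OF v(1)] assms(2) by (simp add: Diff_infinite_finite)
  then obtain a where a: "a \<in> N v - X" by (metis ex_in_conv finite.emptyI)
  have "infinite (N v - X - {a})" using i1 by simp
  then obtain b where b: "b \<in> N v - X - {a}" by (metis ex_in_conv finite.emptyI)
  have "infinite (N v - X - {a} - {b})" using i1 by simp
  then obtain c where c: "c \<in> N v - X - {a} - {b}" by (metis ex_in_conv finite.emptyI)
  have cV: "c \<in> V" using c N_sub by blast
  have "infinite (N c - X - {v} - {a} - {b})" using allinf[OF cV] assms(2) by (simp add: Diff_infinite_finite)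
  then obtain d where d: "d \<in> N c - X - {v} - {a} - {b}" by (metis ex_in_conv finite.emptyI)
  have "cp v a b c d" using a b c d irr unfolding cp_def N_def by auto
  moreover have "{v,a,b,c,d} \<inter> X = {}" using v a b c d by auto
  ultimately show ?thesis by blast
next
  case False
  hence fin: "finite (N x)" if "x \<in> V" for x using that by blast
  define B where "B = X \<union> (\<Union>x\<in>X \<inter> V. N x) \<union> (\<Union>x\<in>X \<inter> V. \<Union>z\<in>N x. N z)"
  have "finite B" unfolding B_def using assms(2) fin N_sub
    by (auto intro!: finite_UN_I)
  then obtain w where w: "w \<in> V" "w \<notin> B" using assms(1)
    by (metis finite_subset subsetI)
  obtain v0 a0 b0 c0 d0 where c0: "distinct [v0,a0,b0,c0,d0]" "J v0 a0" "J v0 b0" "J v0 c0" "J c0 d0"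
    using ex_copy by blast
  obtain f where f: "inj_on f V" "f ` V \<subseteq> V" "\<forall>a b. J a b \<longrightarrow> J (f a) (f b)" "f v0 = w"
    using trans[OF inV[OF c0(2)] w(1)] by blast
  have V5: "{v0,a0,b0,c0,d0} \<subseteq> V" using c0 inV inV2 by auto
  have "inj_on f (set [v0,a0,b0,c0,d0])" using inj_on_subset[OF f(1) V5] by simp
  hence "distinct (map f [v0,a0,b0,c0,d0])"
    using c0(1) by (simp only: distinct_map)
  hence "cp (f v0) (f a0) (f b0) (f c0) (f d0)" using c0 f(3) unfolding cp_def by simp
  moreover have "{f v0, f a0, f b0, f c0, f d0} \<inter> X = {}"
  proof -
    have J1: "J w (f a0)" "J w (f b0)" "J w (f c0)" "J (f c0) (f d0)" using f c0 by auto
    have "w \<notin> X" using w B_def by auto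
    moreover have "f a0 \<notin> X"
    proof
      assume h: "f a0 \<in> X"
      have "w \<in> N (f a0)" using J1 sym unfolding N_def by blast
      moreover have "f a0 \<in> X \<inter> V" using h J1 inV2 by blast
      ultimately have "w \<in> B" unfolding B_def by blast
      thus False using w by simp
    qed
    moreover have "f b0 \<notin> X"
    proof
      assume h: "f b0 \<in> X"
      have "w \<in> N (f b0)" using J1 sym unfolding N_def by blast
      moreover have "f b0 \<in> X \<inter> V" using h J1 inV2 by blast
      ultimately have "w \<in> B" unfolding B_def by blast
      thus False using w by simp
    qed
    moreover have "f c0 \<notin> X"
    proof
      assume h: "f c0 \<in> X"
      have "w \<in> N (f c0)" using J1 sym unfolding N_def by blast
      moreover have "f c0 \<in> X \<inter> V" using h J1 inV2 by blast
      ultimately have "w \<in> B" unfolding B_def by blast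
      thus False using w by simp
    qed
    moreover have "f d0 \<notin> X"
    proof
      assume h: "f d0 \<in> X"
      have "w \<in> N (f c0)" "f c0 \<in> N (f d0)" using J1 sym unfolding N_def by blast+
      moreover have "f d0 \<in> X \<inter> V" using h J1 inV2 by blast
      ultimately have "w \<in> B" unfolding B_def by blast
      thus False using w by simp
    qed
    ultimately show ?thesis using f(4) by auto
  qed
  ultimately show ?thesis by blast
qed

end


locale VTG = BG +
  assumes fin: "finite V"
    and closed: "x \<in> S \<Longrightarrow> S \<subseteq> V \<Longrightarrow> (\<forall>s\<in>S. \<forall>y. J s y \<longrightarrow> y \<in> S) \<Longrightarrow> V \<subseteq> S"
    and big: "card V \<ge> 6"
begin

lemma finN: "finite (N x)" using N_sub fin finite_subset by blast

lemma reg: "x \<in> V \<Longrightarrow> y \<in> V \<Longrightarrow> card (N x) = card (N y)"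
  using N_inj finN by (meson le_antisym)

lemma deg3: assumes "x \<in> V" shows "card (N x) \<ge> 3"
proof -
  obtain v a b c d where c0: "distinct [v,a,b,c,d]" "J v a" "J v b" "J v c" "J c d"
    using ex_copy by blast
  have "{a,b,c} \<subseteq> N v" using c0 unfolding N_def by auto
  hence "card {a,b,c} \<le> card (N v)" using finN card_mono by blast
  moreover have "card {a,b,c} = 3" using c0(1) by simp
  ultimately show ?thesis using reg[OF inV[OF c0(2)] assms] by simp
qed

lemma small: assumes "S \<subseteq> V" "x \<in> S" "\<forall>s\<in>S. N s \<subseteq> S" "card S \<le> 5" shows False
proof -
  have "V \<subseteq> S" using closed[OF assms(2,1)] assms(3) unfolding N_def by blast
  hence "card V \<le> card S" using fin assms(1) by (metis card_mono finite_subset)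
  thus False using big assms(4) by simp
qed

lemma Jcp: "cp v a b c d \<Longrightarrow> J v a \<and> J v b \<and> J v c \<and> J c d" unfolding cp_def by simp

definition near where "near x y \<longleftrightarrow> J x y \<or> (\<exists>u. J x u \<and> J u y) \<or> (\<exists>u w. J x u \<and> J u w \<and> J w y)"

lemma nodiam: assumes "card (N x0) = 3" "x0 \<in> V"
  and d: "J al be" "J al ga" "J al de" "J be ga" "J be de" "ga \<noteq> de"
  shows False
proof -
  have V: "al \<in> V" "ga \<in> V" "be \<in> V" "de \<in> V" using d inV inV2 by blast+
  have k3: "card (N y) = 3" if "y \<in> V" for y using reg[OF that assms(2)] assms(1) by simp
  have dist: "al \<noteq> be" "al \<noteq> ga" "al \<noteq> de" "be \<noteq> ga" "be \<noteq> de" using d irr by metis+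
  have eqN: "N y = {p,q,r}" if "y \<in> V" "J y p" "J y q" "J y r" "p \<noteq> q" "p \<noteq> r" "q \<noteq> r" for y p q r
  proof -
    have "{p,q,r} \<subseteq> N y" using that unfolding N_def by auto
    moreover have "card {p,q,r} = 3" using that by simp
    ultimately show ?thesis using k3[OF that(1)] finN by (metis card_subset_eq)
  qed
  have Nal: "N al = {be,ga,de}" using eqN[OF V(1) d(1,2,3)] dist d(6) by simp
  have Nbe: "N be = {al,ga,de}" using eqN[OF V(3) sym[OF d(1)] d(4,5)] dist d(6) by simp
  have "\<exists>p\<in>N ga. p \<noteq> al \<and> p \<noteq> be"
    using pick[of "{al,be}" "N ga"] k3[OF V(2)] card_ins_le[of al "{be}"] by auto
  then obtain ep where ep: "J ga ep" "ep \<noteq> al" "ep \<noteq> be" unfolding N_def by blast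
  show False
  proof (cases "ep = de")
    case True
    have Nga: "N ga = {al,be,de}" using eqN[OF V(2) sym[OF d(2)] sym[OF d(4)]] ep True dist d(6) by simp
    have "J de ga" using ep True sym by simp
    hence Nde: "N de = {al,be,ga}" using eqN[OF V(4) sym[OF d(3)] sym[OF d(5)]] dist d(6) by simp
    show False
      by (rule small[of "{al,be,ga,de}" al]) (use V Nal Nbe Nga Nde card_ins_le[of al "{be,ga,de}"] card_ins_le[of be "{ga,de}"] card_ins_le[of ga "{de}"] in auto)
  next
    case False
    have Nga: "N ga = {al,be,ep}" using eqN[OF V(2) sym[OF d(2)] sym[OF d(4)] ep(1)] ep dist by simp
    obtain f where f: "inj_on f V" "f ` V \<subseteq> V" "\<forall>a b. J a b \<longrightarrow> J (f a) (f b)" "f al = ga"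
      using trans[OF V(1) V(2)] by blast
    have "J (f al) (f be)" "J (f al) (f ga)" "J (f al) (f de)" "J (f be) (f ga)" "J (f be) (f de)"
      using f(3) d by blast+
    moreover have "f ga \<noteq> f de" using f(1) V d(6) by (meson inj_on_contraD)
    ultimately obtain p q r where pqr: "p \<in> N ga" "q \<in> N ga" "r \<in> N ga" "q \<noteq> r" "J p q" "J p r"
      using f(4) unfolding N_def by blast
    have "p \<noteq> q" "p \<noteq> r" using pqr irr by metis+
    have "ep \<noteq> ga" using ep irr by metis
    have "\<not> J al ep" "\<not> J be ep" using Nal Nbe False ep `ep \<noteq> ga` unfolding N_def by auto
    hence Nep: "al \<notin> N ep" "be \<notin> N ep" using sym unfolding N_def by blast+
    show False using pqr Nga Nal Nbe Nep `p \<noteq> q` `p \<noteq> r` dist ep False sym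
      unfolding N_def by auto
  qed
qed

end


lemma c2: "card {a,b} \<le> 2" using card_ins_le[of a "{b}"] by simp
lemma c3: "card {a,b,c} \<le> 3" using card_ins_le[of a "{b,c}"] c2[of b c] by simp
lemma c4: "card {a,b,c,d} \<le> 4" using card_ins_le[of a "{b,c,d}"] c3[of b c d] by simp
lemma c5: "card {a,b,c,d,e} \<le> 5" using card_ins_le[of a "{b,c,d,e}"] c4[of b c d e] by simp

context VTG begin

lemma Jne: "J a b \<Longrightarrow> a \<noteq> b" using irr by metis

lemma pk: "finite F \<Longrightarrow> card F < card (N x) \<Longrightarrow> \<exists>y. J x y \<and> y \<notin> F"
  using pick unfolding N_def by blast

lemma d1: assumes "J x y" shows "\<exists>v a b c d. cp v a b c d \<and> x \<in> {v,a,b,c,d} \<and> y \<in> {v,a,b,c,d}"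
proof -
  have xV: "x \<in> V" using inV assms by blast
  have k: "card (N x) \<ge> 3" using deg3[OF xV] .
  obtain p where p: "J x p" "p \<notin> {y}" using pk[of "{y}" x] k by auto
  obtain q where q: "J x q" "q \<notin> {y,p}" using pk[of "{y,p}" x] k c2[of y p] by auto
  have ne: "x \<noteq> p" "x \<noteq> q" "x \<noteq> y" using p q assms Jne by auto
  show ?thesis
  proof (cases "\<exists>d. J y d \<and> d \<notin> {x,p,q}")
    case True
    then obtain d where d: "J y d" "d \<notin> {x,p,q}" by blast
    have "cp x p q y d" unfolding cp_def using p q d ne assms Jne by auto
    thus ?thesis by blast
  next
    case F1: False
    show ?thesis
    proof (cases "\<exists>d. J p d \<and> d \<notin> {x,y,q}")
      case True
      then obtain d where d: "J p d" "d \<notin> {x,y,q}" by blast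
      have "cp x y q p d" unfolding cp_def using p q d ne assms Jne by auto
      thus ?thesis by blast
    next
      case F2: False
      show ?thesis
      proof (cases "\<exists>d. J q d \<and> d \<notin> {x,y,p}")
        case True
        then obtain d where d: "J q d" "d \<notin> {x,y,p}" by blast
        have "cp x y p q d" unfolding cp_def using p q d ne assms Jne by auto
        thus ?thesis by blast
      next
        case F3: False
        have Ny: "N y \<subseteq> {x,p,q}" using F1 unfolding N_def by blast
        have Np: "N p \<subseteq> {x,y,q}" using F2 unfolding N_def by blast
        have Nq: "N q \<subseteq> {x,y,p}" using F3 unfolding N_def by blast
        have "card (N y) \<le> 3" using card_mono[OF _ Ny] c3[of x p q] by (meson finite.emptyI finite.insertI le_trans)
        hence k3: "card (N x) = 3" using reg[OF xV inV2[OF assms]] k by simp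
        have "{y,p,q} \<subseteq> N x" using p q assms unfolding N_def by auto
        moreover have "card {y,p,q} = 3" using p q by auto
        ultimately have Nx: "N x = {y,p,q}" using k3 finN by (metis card_subset_eq)
        have False
          by (rule small[of "{x,y,p,q}" x]) (use Nx Ny Np Nq xV p q assms inV2 c4[of x y p q] in auto)
        thus ?thesis ..
      qed
    qed
  qed
qed

lemma d2: assumes "J x u" "J u y" "y \<noteq> x" "\<not> J x y"
  shows "\<exists>v a b c d. cp v a b c d \<and> x \<in> {v,a,b,c,d} \<and> y \<in> {v,a,b,c,d}"
proof -
  have xV: "x \<in> V" using inV assms by blast
  have k: "card (N x) \<ge> 3" using deg3[OF xV] .
  obtain p where p: "J x p" "p \<notin> {u}" using pk[of "{u}" x] k by auto
  obtain q where q: "J x q" "q \<notin> {u,p}" using pk[of "{u,p}" x] k c2[of u p] by auto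
  have "p \<noteq> y" "q \<noteq> y" using p q assms by auto
  hence "cp x p q u y" unfolding cp_def using p q assms Jne by auto
  thus ?thesis by blast
qed

lemma two: assumes "near x y" "y \<noteq> x"
  shows "\<exists>v a b c d. cp v a b c d \<and> x \<in> {v,a,b,c,d} \<and> y \<in> {v,a,b,c,d}"
proof (cases "J x y")
  case True thus ?thesis using d1 by blast
next
  case nxy: False
  show ?thesis
  proof (cases "\<exists>u. J x u \<and> J u y")
    case True thus ?thesis using d2 nxy assms(2) by blast
  next
    case n2: False
    then obtain u w where uw: "J x u" "J u w" "J w y" using assms(1) nxy unfolding near_def by blast
    have "w \<noteq> x" using uw nxy by auto
    have "\<not> J x w" using n2 uw by blast
    have "\<not> J u y" using n2 uw by blast
    have wV: "w \<in> V" using uw inV by blast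
    obtain p where p: "J w p" "p \<notin> {u,y}" using pk[of "{u,y}" w] deg3[OF wV] c2[of u y] by auto
    have "p \<noteq> x" using p `\<not> J x w` sym by blast
    have "y \<noteq> u" using uw nxy by auto
    have "cp w y p u x" unfolding cp_def
      using p uw `p \<noteq> x` `y \<noteq> u` `w \<noteq> x` assms(2) Jne sym by auto
    thus ?thesis by blast
  qed
qed

end


context VTG begin

definition good where "good x \<longleftrightarrow> (\<exists>v a b c d. cp v a b c d \<and> x \<notin> {v,a,b,c,d} \<and> (\<forall>z\<in>{v,a,b,c,d}. near x z))"

lemma goodI: "cp v a b c d \<Longrightarrow> x \<notin> {v,a,b,c,d} \<Longrightarrow> near x v \<Longrightarrow> near x a \<Longrightarrow> near x b \<Longrightarrow> near x c \<Longrightarrow> near x d \<Longrightarrow> good x"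
  unfolding good_def by blast

lemma nearI1: "J x y \<Longrightarrow> near x y" unfolding near_def by blast
lemma nearI2: "J x u \<Longrightarrow> J u y \<Longrightarrow> near x y" unfolding near_def by blast
lemma nearI3: "J x u \<Longrightarrow> J u w \<Longrightarrow> J w y \<Longrightarrow> near x y" unfolding near_def by blast

lemma ball3B: assumes "card (N x) = 3" "x \<in> V" "J x u" "N u = {x,p,q}" "p \<noteq> q" "p \<noteq> x" "q \<noteq> x"
  "N p = {u,q,t}" "t \<noteq> u" "t \<noteq> q" "t \<noteq> x"
  shows "good x"
proof -
  have J: "J u p" "J u q" "J p q" "J p t" "J p u" using assms(4,8) unfolding N_def by auto
  have qV: "q \<in> V" using J inV2 by blast
  obtain r where r: "J q r" "r \<notin> {u,p}" using pk[of "{u,p}" q] deg3[OF qV] c2[of u p] by auto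
  show ?thesis
  proof (cases "r = t")
    case True
    show ?thesis using nodiam[OF assms(1,2), of p q u t] J r True assms sym by blast
  next
    case F1: False
    show ?thesis
    proof (cases "r = x")
      case True
      show ?thesis using nodiam[OF assms(1,2), of u q x p] J r True assms sym by blast
    next
      case False
      have "cp p u t q r" unfolding cp_def using J r F1 False assms Jne by auto
      moreover have "x \<notin> {p,u,t,q,r}" using assms False Jne by auto
      ultimately show ?thesis
        by (rule goodI) (use J assms r in \<open>blast intro: nearI1 nearI2 nearI3\<close>)+
    qed
  qed
qed

lemma ball3A: assumes "card (N x) = 3" "x \<in> V" "J x u" "N u = {x,p,q}" "p \<noteq> q" "p \<noteq> x" "q \<noteq> x"
  "\<not> J p x" shows "good x"
proof -
  have J: "J u p" "J u q" using assms(4) unfolding N_def by auto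
  have pV: "p \<in> V" using J inV2 by blast
  have k3: "card (N p) = 3" using reg[OF pV assms(2)] assms(1) by simp
  obtain s where s: "J p s" "s \<notin> {u}" using pk[of "{u}" p] k3 by auto
  obtain t where t: "J p t" "t \<notin> {u,s}" using pk[of "{u,s}" p] k3 c2[of u s] by auto
  have "{u,s,t} \<subseteq> N p" using s t J sym unfolding N_def by auto
  moreover have "card {u,s,t} = 3" using s t by auto
  ultimately have Np: "N p = {u,s,t}" using k3 finN by (metis card_subset_eq)
  have sx: "s \<noteq> x" "t \<noteq> x" using s t assms(8) sym by blast+
  show ?thesis
  proof (cases "q \<in> {s,t}")
    case False
    have "cp p s t u q" unfolding cp_def using J s t False assms Jne sym by auto
    moreover have "x \<notin> {p,s,t,u,q}" using assms sx Jne by auto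
    ultimately show ?thesis
      by (rule goodI) (use J assms s t in \<open>blast intro: nearI1 nearI2 nearI3 sym\<close>)+
  next
    case True
    show ?thesis
    proof (cases "q = s")
      case True
      show ?thesis by (rule ball3B[OF assms(1-7), of t]) (use Np True s t sx in auto)
    next
      case False
      hence "q = t" using True by simp
      show ?thesis by (rule ball3B[OF assms(1-7), of s]) (use Np `q = t` s t sx in auto)
    qed
  qed
qed

lemma ball3: assumes "card (N x) = 3" "x \<in> V" shows "good x"
proof -
  obtain u where u: "J x u" using pk[of "{}" x] assms by auto
  have uV: "u \<in> V" using u inV2 by blast
  have k3: "card (N u) = 3" using reg[OF uV assms(2)] assms(1) by simp
  obtain p where p: "J u p" "p \<notin> {x}" using pk[of "{x}" u] k3 by auto
  obtain q where q: "J u q" "q \<notin> {x,p}" using pk[of "{x,p}" u] k3 c2[of x p] by auto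
  have "{x,p,q} \<subseteq> N u" using u p q sym unfolding N_def by auto
  moreover have "card {x,p,q} = 3" using p q by auto
  ultimately have Nu: "N u = {x,p,q}" using k3 finN by (metis card_subset_eq)
  show ?thesis
  proof (cases "J p x")
    case False
    show ?thesis by (rule ball3A[OF assms u Nu]) (use p q False in auto)
  next
    case T1: True
    show ?thesis
    proof (cases "J q x")
      case False
      have "N u = {x,q,p}" using Nu by auto
      show ?thesis by (rule ball3A[OF assms u `N u = {x,q,p}`]) (use p q False in auto)
    next
      case True
      show ?thesis using nodiam[OF assms, of x u p q] u p q T1 True sym by blast
    qed
  qed
qed

lemma ball5: assumes "card (N x) \<ge> 5" "x \<in> V" shows "good x"
proof -
  obtain u where u: "J x u" using pk[of "{}" x] assms by auto
  have uV: "u \<in> V" using u inV2 by blast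
  have ku: "card (N u) \<ge> 5" using reg[OF uV assms(2)] assms(1) by simp
  obtain c where c: "J u c" "c \<notin> {x}" using pk[of "{x}" u] ku by auto
  have cV: "c \<in> V" using c inV2 by blast
  have kc: "card (N c) \<ge> 5" using reg[OF cV assms(2)] assms(1) by simp
  obtain d where d: "J c d" "d \<notin> {u,x}" using pk[of "{u,x}" c] kc c2[of u x] by auto
  obtain a where a: "J u a" "a \<notin> {x,c,d}" using pk[of "{x,c,d}" u] ku c3[of x c d] by auto
  obtain b where b: "J u b" "b \<notin> {x,c,d,a}" using pk[of "{x,c,d,a}" u] ku c4[of x c d a] by auto
  have "cp u a b c d" unfolding cp_def using a b c d Jne by auto
  moreover have "x \<notin> {u,a,b,c,d}" using u a b c d Jne by auto
  ultimately show ?thesis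
    by (rule goodI) (use u a b c d in \<open>blast intro: nearI1 nearI2 nearI3\<close>)+
qed

end


context VTG begin

lemma ball4: assumes "card (N x) = 4" "x \<in> V" shows "good x"
proof -
  obtain u where u: "J x u" using pk[of "{}" x] assms by auto
  have uV: "u \<in> V" using u inV2 by blast
  have ku: "card (N u) = 4" using reg[OF uV assms(2)] assms(1) by simp
  have kz: "card (N z) = 4" if "J z w" for z w using reg[OF inV[OF that] assms(2)] assms(1) by simp
  show ?thesis
  proof (cases "\<exists>c d. J u c \<and> c \<noteq> x \<and> J c d \<and> d \<noteq> u \<and> d \<noteq> x \<and> \<not> J u d")
    case True
    then obtain c d where cd: "J u c" "c \<noteq> x" "J c d" "d \<noteq> u" "d \<noteq> x" "\<not> J u d" by blast
    obtain a where a: "J u a" "a \<notin> {x,c}" using pk[of "{x,c}" u] ku c2[of x c] by auto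
    obtain b where b: "J u b" "b \<notin> {x,c,a}" using pk[of "{x,c,a}" u] ku c3[of x c a] by auto
    have "a \<noteq> d" "b \<noteq> d" using a b cd by auto
    hence "cp u a b c d" unfolding cp_def using a b cd Jne by auto
    moreover have "x \<notin> {u,a,b,c,d}" using u a b cd Jne by auto
    ultimately show ?thesis
      by (rule goodI) (use u a b cd in \<open>blast intro: nearI1 nearI2 nearI3\<close>)+
  next
    case False
    hence H: "J u d" if "J u c" "c \<noteq> x" "J c d" "d \<noteq> u" "d \<noteq> x" for c d using that by blast
    have cx: "J c x" if c: "J u c" "c \<noteq> x" for c
    proof (rule ccontr)
      assume ncx: "\<not> J c x"
      have "N c - {u} \<subseteq> N u - {x,c}" using H[OF c] ncx Jne unfolding N_def by auto
      hence "card (N c - {u}) \<le> card (N u - {x,c})" using finN by (meson card_mono finite_Diff)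
      moreover have "card (N c - {u}) = 3" using kz[OF c(1)[THEN sym]] c sym unfolding N_def
        by (simp add: card_Diff_singleton)
      moreover have "card (N u - {x,c}) = 2"
      proof -
        have "{x,c} \<subseteq> N u" using u c sym unfolding N_def by auto
        hence "card (N u - {x,c}) = card (N u) - card {x,c}" using finN by (meson card_Diff_subset finite_subset)
        thus ?thesis using ku c by simp
      qed
      ultimately show False by simp
    qed
    have unu: "u \<notin> N u" using irr unfolding N_def by simp
    have "insert u (N u - {x}) \<subseteq> N x" using u cx sym unfolding N_def by auto
    moreover have "card (insert u (N u - {x})) = 4"
    proof -
      have "x \<in> N u" using u sym unfolding N_def by auto
      hence "card (N u - {x}) = 3" using ku by (simp add: card_Diff_singleton finN)
      thus ?thesis using unu finN by simp
    qed
    ultimately have Nx: "N x = insert u (N u - {x})" using assms(1) finN by (metis card_subset_eq)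
    have "card (insert u (N u)) = 5" using unu ku finN by simp
    moreover have "insert u (N u) \<subseteq> V" using uV N_sub by blast
    moreover have "\<forall>s\<in>insert u (N u). N s \<subseteq> insert u (N u)"
    proof
      fix s assume s: "s \<in> insert u (N u)"
      show "N s \<subseteq> insert u (N u)"
      proof (cases "s = u")
        case True thus ?thesis by blast
      next
        case F: False
        show ?thesis
        proof (cases "s = x")
          case True thus ?thesis using Nx by blast
        next
          case False
          have Jus: "J u s" using s F unfolding N_def by simp
          show ?thesis
          proof
            fix z assume "z \<in> N s"
            hence "J s z" unfolding N_def by simp
            thus "z \<in> insert u (N u)" using H[OF Jus False] u sym unfolding N_def by blast
          qed
        qed
      qed
    qed
    ultimately have False using small[of "insert u (N u)" u] by simp
    thus ?thesis ..
  qed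
qed

lemma ball: assumes "x \<in> V" shows "good x"
proof -
  have "card (N x) \<ge> 3" using deg3[OF assms] .
  then consider "card (N x) = 3" | "card (N x) = 4" | "card (N x) \<ge> 5" by linarith
  thus ?thesis using ball3 ball4 ball5 assms by metis
qed

lemma twohit: assumes "X \<subseteq> V" "\<forall>v a b c d. cp v a b c d \<longrightarrow> {v,a,b,c,d} \<inter> X \<noteq> {}"
  shows "\<exists>v a b c d. cp v a b c d \<and> (\<exists>x y. x \<in> X \<and> y \<in> X \<and> x \<noteq> y \<and> x \<in> {v,a,b,c,d} \<and> y \<in> {v,a,b,c,d})"
proof -
  obtain v a b c d where "distinct [v,a,b,c,d]" "J v a" "J v b" "J v c" "J c d" using ex_copy by blast
  hence "cp v a b c d" unfolding cp_def by simp
  then obtain x where x: "x \<in> X" using assms(2) by blast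
  obtain v a b c d where c1: "cp v a b c d" "x \<notin> {v,a,b,c,d}" "\<forall>z\<in>{v,a,b,c,d}. near x z"
    using ball[of x] x assms(1) unfolding good_def by blast
  obtain y where y: "y \<in> X" "y \<in> {v,a,b,c,d}" using assms(2) c1(1) by blast
  have "near x y" "y \<noteq> x" using y c1 by auto
  from two[OF this] obtain v a b c d where "cp v a b c d" "x \<in> {v,a,b,c,d}" "y \<in> {v,a,b,c,d}" by blast
  thus ?thesis using x y `y \<noteq> x` by blast
qed

end


lemma dc: assumes "finite A" "finite B"
  shows "(\<Sum>l\<in>A. card (S l \<inter> B)) = (\<Sum>x\<in>B. card {l\<in>A. x \<in> S l})"
proof -
  have "(\<Sum>l\<in>A. card (S l \<inter> B)) = (\<Sum>l\<in>A. \<Sum>x\<in>B. if x \<in> S l then 1 else 0)"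
  proof (rule sum.cong)
    fix l show "card (S l \<inter> B) = (\<Sum>x\<in>B. if x \<in> S l then 1 else 0)"
      using assms(2) by (simp add: sum.If_cases Int_commute Int_def)
  qed simp
  also have "\<dots> = (\<Sum>x\<in>B. \<Sum>l\<in>A. if x \<in> S l then 1 else 0)" by (rule sum.swap)
  also have "\<dots> = (\<Sum>x\<in>B. card {l\<in>A. x \<in> S l})"
    using assms(1) by (simp add: sum.If_cases Int_def)
  finally show ?thesis .
qed

context VTG begin

definition Cp where "Cp = {l. \<exists>v a b c d. l = [v,a,b,c,d] \<and> cp v a b c d}"
definition cnt where "cnt x = card {l\<in>Cp. x \<in> set l}"

lemma Cp_sub: assumes "l \<in> Cp" shows "set l \<subseteq> V \<and> length l = 5 \<and> card (set l) = 5"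
proof -
  obtain v a b c d where lv: "l = [v,a,b,c,d]" "cp v a b c d" using assms unfolding Cp_def by blast
  have "card (set l) = length l" using lv distinct_card unfolding cp_def by blast
  moreover have "set l \<subseteq> V" using lv inV inV2 unfolding cp_def by auto
  ultimately show ?thesis using lv by simp
qed

lemma finCp: "finite Cp"
proof -
  have "Cp \<subseteq> {l. set l \<subseteq> V \<and> length l = 5}" using Cp_sub by blast
  thus ?thesis using finite_lists_length_eq[OF fin] finite_subset by blast
qed

lemma cnt_le: assumes "x \<in> V" "y \<in> V" shows "cnt x \<le> cnt y"
proof -
  obtain f where f: "inj_on f V" "f ` V \<subseteq> V" "\<forall>a b. J a b \<longrightarrow> J (f a) (f b)" "f x = y"
    using trans[OF assms] by blast
  have "map f ` {l\<in>Cp. x \<in> set l} \<subseteq> {l\<in>Cp. y \<in> set l}"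
  proof
    fix l' assume "l' \<in> map f ` {l\<in>Cp. x \<in> set l}"
    then obtain l where l: "l \<in> Cp" "x \<in> set l" "l' = map f l" by blast
    then obtain v a b c d where lv: "l = [v,a,b,c,d]" "cp v a b c d" unfolding Cp_def by blast
    have "inj_on f (set l)" using Cp_sub[OF l(1)] f(1) inj_on_subset by blast
    hence "distinct (map f l)" using lv unfolding cp_def by (simp only: distinct_map)
    hence "cp (f v) (f a) (f b) (f c) (f d)" using lv f(3) unfolding cp_def by simp
    hence "l' \<in> Cp" using l(3) lv unfolding Cp_def by auto
    moreover have "y \<in> set l'" using l f(4) by auto
    ultimately show "l' \<in> {l\<in>Cp. y \<in> set l}" by blast
  qed
  moreover have "inj_on (map f) {l\<in>Cp. x \<in> set l}"
  proof (rule inj_onI)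
    fix l1 l2 assume "l1 \<in> {l\<in>Cp. x \<in> set l}" "l2 \<in> {l\<in>Cp. x \<in> set l}" "map f l1 = map f l2"
    moreover have "set l1 \<union> set l2 \<subseteq> V" using calculation Cp_sub by blast
    hence "inj_on f (set l1 \<union> set l2)" using f(1) inj_on_subset by blast
    ultimately show "l1 = l2" using inj_on_map_eq_map by blast
  qed
  moreover have "finite {l\<in>Cp. y \<in> set l}" using finCp by simp
  ultimately show ?thesis unfolding cnt_def by (intro card_inj_on_le[of "map f"]) blast+
qed

lemma count: assumes "X \<subseteq> V" "\<forall>v a b c d. cp v a b c d \<longrightarrow> {v,a,b,c,d} \<inter> X \<noteq> {}"
  shows "card V < 5 * card X"
proof -
  obtain v0 a0 b0 c0 d0 where c0: "distinct [v0,a0,b0,c0,d0]" "J v0 a0" "J v0 b0" "J v0 c0" "J c0 d0"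
    using ex_copy by blast
  have v0: "v0 \<in> V" using c0 inV by blast
  define T where "T = cnt v0"
  have cT: "cnt x = T" if "x \<in> V" for x using cnt_le[OF that v0] cnt_le[OF v0 that] T_def by simp
  have finX: "finite X" using assms(1) fin finite_subset by blast
  define M where "M = card Cp"
  have "(\<Sum>l\<in>Cp. card (set l \<inter> V)) = (\<Sum>x\<in>V. cnt x)" unfolding cnt_def by (rule dc[OF finCp fin])
  also have "\<dots> = card V * T" using cT by simp
  finally have e1: "(\<Sum>l\<in>Cp. card (set l \<inter> V)) = card V * T" .
  have "(\<Sum>l\<in>Cp. card (set l \<inter> V)) = (\<Sum>l\<in>Cp. 5)"
    by (rule sum.cong) (use Cp_sub in \<open>auto simp: Int_absorb2\<close>)
  hence e2: "5 * M = card V * T" using e1 M_def by simp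
  have "(\<Sum>l\<in>Cp. card (set l \<inter> X)) = (\<Sum>x\<in>X. cnt x)" unfolding cnt_def by (rule dc[OF finCp finX])
  also have "\<dots> = card X * T" using cT assms(1) by (simp add: subset_iff)
  finally have e3: "(\<Sum>l\<in>Cp. card (set l \<inter> X)) = card X * T" .
  have "(\<Sum>l\<in>Cp. 1) < (\<Sum>l\<in>Cp. card (set l \<inter> X))"
  proof (rule sum_strict_mono_ex1[OF finCp])
    show "\<forall>l\<in>Cp. 1 \<le> card (set l \<inter> X)"
    proof
      fix l assume "l \<in> Cp"
      then obtain v a b c d where "l = [v,a,b,c,d]" "cp v a b c d" unfolding Cp_def by blast
      hence "set l \<inter> X \<noteq> {}" using assms(2) by simp
      thus "1 \<le> card (set l \<inter> X)" by (simp add: Suc_le_eq card_gt_0_iff)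
    qed
    obtain v a b c d x y where h: "cp v a b c d" "x \<in> X" "y \<in> X" "x \<noteq> y" "x \<in> {v,a,b,c,d}" "y \<in> {v,a,b,c,d}"
      using twohit[OF assms] by blast
    have "[v,a,b,c,d] \<in> Cp" using h unfolding Cp_def by blast
    moreover have "{x,y} \<subseteq> set [v,a,b,c,d] \<inter> X" using h by auto
    hence "2 \<le> card (set [v,a,b,c,d] \<inter> X)" using h(4) by (metis card_2_iff card_mono finite_Int finite_set)
    ultimately show "\<exists>l\<in>Cp. 1 < card (set l \<inter> X)" by (intro bexI[of _ "[v,a,b,c,d]"]) simp_all
  qed
  hence "M < card X * T" using e3 M_def by simp
  hence "5 * M < 5 * (card X * T)" by simp
  hence "card V * T < (5 * card X) * T" using e2 by (simp add: mult.assoc)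
  thus ?thesis using mult_less_cancel2 by blast
qed

end


lemma enat_Inf_attained:
  assumes "(INF X\<in>C. enat (h X)) \<noteq> \<infinity>"
  shows "\<exists>X\<in>C. (INF X\<in>C. enat (h X)) = enat (h X)"
proof -
  have ne: "(\<lambda>X. enat (h X)) ` C \<noteq> {}" using assms by (auto simp: Inf_enat_def)
  have "Inf ((\<lambda>X. enat (h X)) ` C) = (LEAST x. x \<in> (\<lambda>X. enat (h X)) ` C)"
    using ne by (simp add: Inf_enat_def)
  moreover have "(LEAST x. x \<in> (\<lambda>X. enat (h X)) ` C) \<in> (\<lambda>X. enat (h X)) ` C"
    using ne by (metis LeastI ex_in_conv)
  ultimately show ?thesis by auto
qed

theorem theorem2:
  fixes V :: "'v set" and E :: "'e set" and ends :: "'e \<Rightarrow> 'v set"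
  assumes "multigraph V E ends"
    and "vertex_transitive V E ends"
    and "connected_graph V E ends"
    and "infinite V \<or> card V > 5"
    and "\<exists>v a b c d. D5_copy V E ends v a b c d"
    and "Upsilon_v_D5 V E ends \<noteq> \<infinity>"
  shows "Upsilon_v_sym_D5 V E ends < 5 * Upsilon_v_D5 V E ends"
proof -
  define J where "J x y \<longleftrightarrow> adj E ends x y \<and> x \<noteq> y" for x y
  have adj_sym: "adj E ends y x" if "adj E ends x y" for x y
    using that unfolding adj_def by (metis insert_commute)
  have adj_V: "x \<in> V \<and> y \<in> V" if "adj E ends x y" for x y
    using that assms(1) unfolding adj_def multigraph_def by blast
  have aut: "inj_on f V \<and> f ` V = V \<and> (\<forall>a b. adj E ends a b \<longrightarrow> adj E ends (f a) (f b))"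
    if "is_aut V E ends f g" for f g
  proof -
    have b: "bij_betw f V V" "bij_betw g E E" "\<forall>e\<in>E. ends (g e) = f ` ends e"
      using that unfolding is_aut_def by auto
    have "adj E ends (f a) (f b)" if ab: "adj E ends a b" for a b
    proof -
      obtain e where e: "e \<in> E" "ends e = {a,b}" using ab unfolding adj_def by blast
      have "g e \<in> E" using b(2) e(1) bij_betwE by blast
      moreover have "ends (g e) = {f a, f b}" using b(3) e by simp
      ultimately show ?thesis unfolding adj_def by blast
    qed
    thus ?thesis using b(1) unfolding bij_betw_def by blast
  qed
  have cpeq: "D5_copy V E ends v a b c d \<longleftrightarrow> distinct [v,a,b,c,d] \<and> J v a \<and> J v b \<and> J v c \<and> J c d" for v a b c d
    unfolding D5_copy_def J_def using adj_V by auto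
  interpret BG V J
  proof
    show "J x y \<Longrightarrow> J y x" for x y unfolding J_def using adj_sym by blast
    show "\<not> J x x" for x unfolding J_def by simp
    show "J x y \<Longrightarrow> x \<in> V" for x y unfolding J_def using adj_V by blast
    show "\<exists>v a b c d. distinct [v,a,b,c,d] \<and> J v a \<and> J v b \<and> J v c \<and> J c d" using assms(5) cpeq by blast
    fix x y assume xy: "x \<in> V" "y \<in> V"
    then obtain f g where fg: "is_aut V E ends f g" "f x = y" using assms(2) unfolding vertex_transitive_def by blast
    have A: "inj_on f V" "f ` V = V" "\<forall>a b. adj E ends a b \<longrightarrow> adj E ends (f a) (f b)"
      using aut[OF fg(1)] by auto
    have "\<forall>a b. J a b \<longrightarrow> J (f a) (f b)"
    proof (intro allI impI)
      fix a b assume "J a b"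
      hence "adj E ends a b" "a \<noteq> b" "a \<in> V" "b \<in> V" unfolding J_def using adj_V by auto
      thus "J (f a) (f b)" using A unfolding J_def inj_on_def by blast
    qed
    hence "inj_on f V" "f ` V \<subseteq> V" "\<forall>a b. J a b \<longrightarrow> J (f a) (f b)" using A by auto
    thus "\<exists>f. inj_on f V \<and> f ` V \<subseteq> V \<and> (\<forall>a b. J a b \<longrightarrow> J (f a) (f b)) \<and> f x = y" using fg(2) by blast
  qed
  have cpeq2: "D5_copy V E ends v a b c d \<longleftrightarrow> cp v a b c d" for v a b c d using cpeq cp_def by simp
  show ?thesis
  proof (cases "finite V")
    case False
    have "{X. finite X \<and> D5_vertex_cover V E ends X} = {}"
    proof (rule ccontr)
      assume "{X. finite X \<and> D5_vertex_cover V E ends X} \<noteq> {}"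
      then obtain X where X: "finite X" "D5_vertex_cover V E ends X" by blast
      obtain v a b c d where "cp v a b c d" "{v,a,b,c,d} \<inter> X = {}" using infinite_case[OF False X(1)] by blast
      thus False using X(2) cpeq2 unfolding D5_vertex_cover_def by blast
    qed
    hence "Upsilon_v_D5 V E ends = \<infinity>" unfolding Upsilon_v_D5_def by (simp only: image_empty) (simp add: Inf_enat_def)
    thus ?thesis using assms(6) by simp
  next
    case True
    interpret VTG V J
    proof
      show "finite V" by fact
      show "card V \<ge> 6" using assms(4) True by simp
      fix x S assume h: "x \<in> S" "S \<subseteq> V" "\<forall>s\<in>S. \<forall>y. J s y \<longrightarrow> y \<in> S"
      show "V \<subseteq> S"
      proof
        fix y assume "y \<in> V"
        hence "(x, y) \<in> {(u, w). adj E ends u w}\<^sup>*" using h assms(3) unfolding connected_graph_def by blast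
        thus "y \<in> S"
        proof (induction rule: rtrancl_induct)
          case base thus ?case using h by simp
        next
          case (step z w) thus ?case using h(3) unfolding J_def by (cases "z = w") auto
        qed
      qed
    qed
    have bound: "card V < 5 * card X" if "finite X" "D5_vertex_cover V E ends X" for X
      using count[of X] that cpeq2 unfolding D5_vertex_cover_def by blast
    obtain X where X: "X \<in> {X. finite X \<and> D5_vertex_cover V E ends X}"
      "Upsilon_v_D5 V E ends = enat (card X)"
      using enat_Inf_attained[of card] assms(6) unfolding Upsilon_v_D5_def by blast
    have "V \<in> {X. finite X \<and> D5_vertex_cover V E ends X \<and> aut_invariant V E ends X}"
    proof -
      have "D5_vertex_cover V E ends V"
        unfolding D5_vertex_cover_def D5_copy_def by auto
      moreover have "aut_invariant V E ends V" unfolding aut_invariant_def using aut by blast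
      ultimately show ?thesis using True by blast
    qed
    hence "Upsilon_v_sym_D5 V E ends \<le> enat (card V)" unfolding Upsilon_v_sym_D5_def by (rule INF_lower)
    also have "enat (card V) < enat (5 * card X)" using bound X(1) by simp
    also have "enat (5 * card X) = 5 * Upsilon_v_D5 V E ends" using X(2) by (simp add: numeral_eq_enat)
    finally show ?thesis .
  qed
qed


end
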